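(* A hypersemigroup $(H,\circ)$ is intra-regular if and only if for every right ideal $X$, every left ideal $Y$ and every bi-ideal $B$ of $H$ we have $X\cap B\cap Y\subseteq Y*B*X$.
   Context: Let $H$ be a nonempty set and $\mathcal{P}^*(H)$ the set of all nonempty subsets of $H$. A hyperoperation on $H$ is a map $\circ: H\times H\to \mathcal{P}^*(H)$; the pair $(H,\circ)$ is a hypergroupoid. For $A,B\in\mathcal{P}^*(H)$ define $A*B:=\bigcup_{(a,b)\in A\times B}(a\circ b)$. A hypergroupoid is a hypersemigroup if $\{x\}*(y\circ z)=(x\circ y)*\{z\}$ for all $x,y,z\in H$; then $*$ is associative on $\mathcal{P}^*(H)$. A hypersemigroup is intra-regular if for every $a\in H$ there exist $x,y\in H$ with $a\in\{x\}*\{a\}*\{a\}*\{y\}$. A nonempty subset $A$ of $H$ is a left ideal if $H*A\subseteq A$ and a right ideal if $A*H\subseteq A$. A nonempty subset $B$ of $H$ is a bi-ideal if $B*H*B\subseteq B$. *)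

theory Defs
  imports Main
begin

definition hypergroupoid :: "'a set \<Rightarrow> ('a \<Rightarrow> 'a \<Rightarrow> 'a set) \<Rightarrow> bool" where
  "hypergroupoid H op \<longleftrightarrow> H \<noteq> {} \<and>
     (\<forall>x\<in>H. \<forall>y\<in>H. op x y \<noteq> {} \<and> op x y \<subseteq> H)"

definition setmul :: "('a \<Rightarrow> 'a \<Rightarrow> 'a set) \<Rightarrow> 'a set \<Rightarrow> 'a set \<Rightarrow> 'a set" where
  "setmul op A B = (\<Union>(a, b) \<in> A \<times> B. op a b)"

definition hypersemigroup :: "'a set \<Rightarrow> ('a \<Rightarrow> 'a \<Rightarrow> 'a set) \<Rightarrow> bool" where
  "hypersemigroup H op \<longleftrightarrow> hypergroupoid H op \<and>
     (\<forall>x\<in>H. \<forall>y\<in>H. \<forall>z\<in>H. setmul op {x} (op y z) = setmul op (op x y) {z})"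

definition intra_regular :: "'a set \<Rightarrow> ('a \<Rightarrow> 'a \<Rightarrow> 'a set) \<Rightarrow> bool" where
  "intra_regular H op \<longleftrightarrow>
     (\<forall>a\<in>H. \<exists>x\<in>H. \<exists>y\<in>H.
        a \<in> setmul op (setmul op (setmul op {x} {a}) {a}) {y})"

definition left_ideal :: "'a set \<Rightarrow> ('a \<Rightarrow> 'a \<Rightarrow> 'a set) \<Rightarrow> 'a set \<Rightarrow> bool" where
  "left_ideal H op A \<longleftrightarrow> A \<noteq> {} \<and> A \<subseteq> H \<and> setmul op H A \<subseteq> A"

definition right_ideal :: "'a set \<Rightarrow> ('a \<Rightarrow> 'a \<Rightarrow> 'a set) \<Rightarrow> 'a set \<Rightarrow> bool" where
  "right_ideal H op A \<longleftrightarrow> A \<noteq> {} \<and> A \<subseteq> H \<and> setmul op A H \<subseteq> A"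

definition bi_ideal :: "'a set \<Rightarrow> ('a \<Rightarrow> 'a \<Rightarrow> 'a set) \<Rightarrow> 'a set \<Rightarrow> bool" where
  "bi_ideal H op B \<longleftrightarrow> B \<noteq> {} \<and> B \<subseteq> H \<and> setmul op (setmul op B H) B \<subseteq> B"

end

theory Submission
  imports Defs
begin

lemma sm_mono: "A \<subseteq> A' \<Longrightarrow> B \<subseteq> B' \<Longrightarrow> setmul op A B \<subseteq> setmul op A' B'"
  unfolding setmul_def by blast

lemma sm_Un1: "setmul op (A \<union> B) C = setmul op A C \<union> setmul op B C"
  unfolding setmul_def by blast

lemma sm_Un2: "setmul op C (A \<union> B) = setmul op C A \<union> setmul op C B"
  unfolding setmul_def by blast

lemma sm_sub: "hypergroupoid H op \<Longrightarrow> A \<subseteq> H \<Longrightarrow> B \<subseteq> H \<Longrightarrow> setmul op A B \<subseteq> H"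
  unfolding setmul_def hypergroupoid_def by blast

lemma sm_assoc:
  assumes hs: "hypersemigroup H op" and "A \<subseteq> H" "B \<subseteq> H" "C \<subseteq> H"
  shows "setmul op (setmul op A B) C = setmul op A (setmul op B C)"
proof -
  have ax: "\<And>x y z. x\<in>H \<Longrightarrow> y\<in>H \<Longrightarrow> z\<in>H \<Longrightarrow> setmul op {x} (op y z) = setmul op (op x y) {z}"
    using hs unfolding hypersemigroup_def by blast
  show ?thesis
  proof (rule set_eqI, rule iffI)
    fix w assume "w \<in> setmul op (setmul op A B) C"
    then obtain a b c u where abc: "a\<in>A" "b\<in>B" "c\<in>C" "u \<in> op a b" "w \<in> op u c"
      unfolding setmul_def by blast
    then have "w \<in> setmul op (op a b) {c}" unfolding setmul_def by blast
    then have "w \<in> setmul op {a} (op b c)" using ax[of a b c] abc assms by blast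
    then show "w \<in> setmul op A (setmul op B C)" using abc unfolding setmul_def by blast
  next
    fix w assume "w \<in> setmul op A (setmul op B C)"
    then obtain a b c u where abc: "a\<in>A" "b\<in>B" "c\<in>C" "u \<in> op b c" "w \<in> op a u"
      unfolding setmul_def by blast
    then have "w \<in> setmul op {a} (op b c)" unfolding setmul_def by blast
    then have "w \<in> setmul op (op a b) {c}" using ax[of a b c] abc assms by blast
    then show "w \<in> setmul op (setmul op A B) C" using abc unfolding setmul_def by blast
  qed
qed

lemma sm_single:
  assumes "w \<in> setmul op (setmul op (setmul op H {a}) {a}) K"
  shows "\<exists>x\<in>H. \<exists>y\<in>K. w \<in> setmul op (setmul op (setmul op {x} {a}) {a}) {y}"
proof -
  from assms obtain v y where v: "v \<in> setmul op (setmul op H {a}) {a}" "y \<in> K" "w \<in> op v y"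
    unfolding setmul_def by blast
  from v(1) obtain u where u: "u \<in> setmul op H {a}" "v \<in> op u a"
    unfolding setmul_def by blast
  from u(1) obtain x where x: "x \<in> H" "u \<in> op x a"
    unfolding setmul_def by blast
  have "w \<in> setmul op (setmul op (setmul op {x} {a}) {a}) {y}"
    using x u v unfolding setmul_def by blast
  with x v show ?thesis by blast
qed

theorem proposition24:
  fixes H :: "'a set" and op :: "'a \<Rightarrow> 'a \<Rightarrow> 'a set"
  assumes "hypersemigroup H op"
  shows "intra_regular H op \<longleftrightarrow>
    (\<forall>X Y B. right_ideal H op X \<longrightarrow> left_ideal H op Y \<longrightarrow> bi_ideal H op B \<longrightarrow>
       X \<inter> B \<inter> Y \<subseteq> setmul op (setmul op Y B) X)"
proof -
  have hg: "hypergroupoid H op" using assms unfolding hypersemigroup_def by blast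
  note sub = sm_sub[OF hg]
  note asc = sm_assoc[OF assms]
  have HH: "setmul op H H \<subseteq> H" using sub by blast
  show ?thesis
  proof
    assume ir: "intra_regular H op"
    show "\<forall>X Y B. right_ideal H op X \<longrightarrow> left_ideal H op Y \<longrightarrow> bi_ideal H op B \<longrightarrow>
       X \<inter> B \<inter> Y \<subseteq> setmul op (setmul op Y B) X"
    proof (intro allI impI subsetI)
      fix X Y B a
      assume X: "right_ideal H op X" and Y: "left_ideal H op Y" and B: "bi_ideal H op B"
        and a: "a \<in> X \<inter> B \<inter> Y"
      have XH: "X \<subseteq> H" "setmul op X H \<subseteq> X" using X unfolding right_ideal_def by auto
      have YH: "Y \<subseteq> H" "setmul op H Y \<subseteq> Y" using Y unfolding left_ideal_def by auto
      have BH: "B \<subseteq> H" "setmul op (setmul op B H) B \<subseteq> B" using B unfolding bi_ideal_def by auto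
      have aH: "a \<in> H" using a XH by auto
      then obtain x y where xy: "x \<in> H" "y \<in> H"
        "a \<in> setmul op (setmul op (setmul op {x} {a}) {a}) {y}"
        using ir unfolding intra_regular_def by blast
      define S where "S = {x}"
      define T where "T = {y}"
      define A where "A = {a}"
      have SH: "S \<subseteq> H" "T \<subseteq> H" "A \<subseteq> H" using xy aH S_def T_def A_def by auto
      define E where "E = setmul op S (setmul op A (setmul op A T))"
      have AE: "A \<subseteq> E" using xy(3) SH unfolding E_def S_def[symmetric] T_def[symmetric] A_def[symmetric]
        by (simp add: asc sub A_def)
      have "A \<subseteq> setmul op S (setmul op E (setmul op E T))"
        using AE sm_mono[OF order_refl[of S] sm_mono[OF AE sm_mono[OF AE order_refl[of T]]]]
        unfolding E_def by (rule order_trans)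
      also have "\<dots> = setmul op (setmul op (setmul op S (setmul op S A))
                     (setmul op A (setmul op T (setmul op S A)))) (setmul op A (setmul op T T))"
        unfolding E_def using SH by (simp add: asc sub)
      also have "\<dots> \<subseteq> setmul op (setmul op Y B) X"
      proof (rule sm_mono[OF sm_mono])
        have AY: "A \<subseteq> Y" using a A_def by auto
        have "setmul op S (setmul op S A) \<subseteq> setmul op H (setmul op H Y)"
          by (rule sm_mono[OF SH(1) sm_mono[OF SH(1) AY]])
        also have "\<dots> \<subseteq> setmul op H Y" using sm_mono[OF order_refl YH(2)] .
        finally show "setmul op S (setmul op S A) \<subseteq> Y" using YH by blast
      next
        have AB: "A \<subseteq> B" using a A_def by auto
        have "setmul op A (setmul op T (setmul op S A)) \<subseteq> setmul op B (setmul op H (setmul op H B))"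
          by (rule sm_mono[OF AB sm_mono[OF SH(2) sm_mono[OF SH(1) AB]]])
        also have "\<dots> = setmul op (setmul op B (setmul op H H)) B"
          using BH by (simp add: asc sub)
        also have "\<dots> \<subseteq> setmul op (setmul op B H) B" by (intro sm_mono HH order_refl)
        finally show "setmul op A (setmul op T (setmul op S A)) \<subseteq> B" using BH by blast
      next
        have AX: "A \<subseteq> X" using a A_def by auto
        have "setmul op A (setmul op T T) \<subseteq> setmul op X (setmul op H H)"
          by (rule sm_mono[OF AX sm_mono[OF SH(2) SH(2)]])
        also have "\<dots> \<subseteq> setmul op X H" by (intro sm_mono HH order_refl)
        finally show "setmul op A (setmul op T T) \<subseteq> X" using XH by blast
      qed
      finally show "a \<in> setmul op (setmul op Y B) X" using A_def by blast
    qed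
  next
    assume C: "\<forall>X Y B. right_ideal H op X \<longrightarrow> left_ideal H op Y \<longrightarrow> bi_ideal H op B \<longrightarrow>
       X \<inter> B \<inter> Y \<subseteq> setmul op (setmul op Y B) X"
    show "intra_regular H op"
      unfolding intra_regular_def
    proof
      fix a assume aH: "a \<in> H"
      define A where "A = {a}"
      have AH: "A \<subseteq> H" using aH A_def by auto
      define R where "R = A \<union> setmul op A H"
      define L where "L = A \<union> setmul op H A"
      have RH: "R \<subseteq> H" "L \<subseteq> H" using AH sub R_def L_def by auto
      have RX: "\<And>Z. Z \<subseteq> H \<Longrightarrow> setmul op R Z \<subseteq> setmul op A H"
      proof -
        fix Z assume Z: "Z \<subseteq> H"
        have "setmul op R Z = setmul op A Z \<union> setmul op A (setmul op H Z)"
          unfolding R_def sm_Un1 using AH Z by (simp add: asc)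
        also have "\<dots> \<subseteq> setmul op A H" using Z sub[of H Z] by (auto intro: sm_mono[THEN subsetD])
        finally show "setmul op R Z \<subseteq> setmul op A H" .
      qed
      have rR: "right_ideal H op R" unfolding right_ideal_def using RH RX[of H] R_def A_def by auto
      have bR: "bi_ideal H op R" unfolding bi_ideal_def
      proof (intro conjI)
        have "setmul op (setmul op R H) R \<subseteq> setmul op (setmul op A H) R"
          by (rule sm_mono[OF RX[OF order_refl] order_refl])
        also have "\<dots> = setmul op A (setmul op H R)" using AH RH by (simp add: asc)
        also have "\<dots> \<subseteq> setmul op A H" by (rule sm_mono[OF order_refl sub[OF order_refl RH(1)]])
        finally show "setmul op (setmul op R H) R \<subseteq> R" unfolding R_def by blast
      qed (use RH R_def A_def in auto)
      have lL: "left_ideal H op L" unfolding left_ideal_def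
      proof (intro conjI)
        have "setmul op H L = setmul op H A \<union> setmul op (setmul op H H) A"
          unfolding L_def sm_Un2 using AH by (simp add: asc)
        also have "\<dots> \<subseteq> setmul op H A" using HH by (auto intro: sm_mono[THEN subsetD])
        finally show "setmul op H L \<subseteq> L" unfolding L_def by blast
      qed (use RH L_def A_def in auto)
      have "R \<inter> R \<inter> L \<subseteq> setmul op (setmul op L R) R" by (rule C[rule_format, OF rR lL bR])
      moreover have "a \<in> R" unfolding R_def A_def by simp
      moreover have "a \<in> L" unfolding L_def A_def by simp
      ultimately have "a \<in> setmul op (setmul op L R) R" by blast
      also have "\<dots> = setmul op L (setmul op R R)" using RH by (simp add: asc)
      also have "\<dots> \<subseteq> setmul op L (setmul op A H)" by (rule sm_mono[OF order_refl RX[OF RH(1)]])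
      also have "\<dots> = setmul op A (setmul op A H) \<union> setmul op H (setmul op A (setmul op A H))"
        unfolding L_def sm_Un1 using AH by (simp add: asc sub)
      finally have a1: "a \<in> setmul op A (setmul op A H) \<union> setmul op H (setmul op A (setmul op A H))" .
      have a2: "a \<in> setmul op H (setmul op A (setmul op A H))"
      proof (cases "a \<in> setmul op A (setmul op A H)")
        case True
        then have AA: "A \<subseteq> setmul op A (setmul op A H)" using A_def by auto
        have "setmul op A (setmul op A H) \<subseteq> setmul op A (setmul op (setmul op A (setmul op A H)) H)"
          by (rule sm_mono[OF order_refl sm_mono[OF AA order_refl]])
        also have "\<dots> = setmul op A (setmul op A (setmul op A (setmul op H H)))"
          using AH by (simp add: asc sub)
        also have "\<dots> \<subseteq> setmul op H (setmul op A (setmul op A H))"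
          by (rule sm_mono[OF AH sm_mono[OF order_refl sm_mono[OF order_refl HH]]])
        finally show ?thesis using True by blast
      next
        case False then show ?thesis using a1 by blast
      qed
      have "setmul op H (setmul op A (setmul op A H)) = setmul op (setmul op (setmul op H A) A) H"
        using AH by (simp add: asc sub)
      with a2 show "\<exists>x\<in>H. \<exists>y\<in>H. a \<in> setmul op (setmul op (setmul op {x} {a}) {a}) {y}"
        by (intro sm_single) (simp add: A_def)
    qed
  qed
qed

end
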